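(* Let $q$ be a prime power, $m\ge1$, and $1\le k<n$ integers. Let $X\in \mathbb{F}_{q^m}^{k\times(n-k)}$ be chosen uniformly at random. Then $$\Pr\big(\mathrm{rs} [\,I_k \mid X\,] \text{ is an MRD code}\big) \geq 1-\sum_{r=0}^k r\binom{k}{k-r}_q\binom{n-k}{r}_q q^{r^2}q^{-m}.$$
   Context: $\binom{a}{b}_q$ is the Gaussian binomial coefficient, the number of $b$-dimensional subspaces of $\mathbb{F}_q^a$. Fix an $\mathbb{F}_q$-basis $b_1,\dots,b_m$ of $\mathbb{F}_{q^m}$; the rank of $v\in\mathbb{F}_{q^m}^n$ is the rank of the matrix $M\in\mathbb{F}_q^{m\times n}$ with $v_j=\sum_i M_{ij}b_i$, and the rank distance is $d_R(u,v)=\mathrm{rk}(u-v)$. A linear rank-metric code of dimension $k$ is a $k$-dimensional $\mathbb{F}_{q^m}$-subspace of $\mathbb{F}_{q^m}^n$; it is MRD if its minimum rank distance is $n-k+1$. $\mathrm{rs}$ denotes the $\mathbb{F}_{q^m}$-row space. *)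

theory Defs
  imports Complex_Main "HOL-Library.FuncSet" "HOL-Computational_Algebra.Primes"
begin

text \<open>F is a subfield of the finite field 'a (playing the role of F_q inside F_{q^m}).\<close>
definition subfield :: "'a::field set \<Rightarrow> bool" where
  "subfield F \<longleftrightarrow> 0 \<in> F \<and> 1 \<in> F \<and>
     (\<forall>x\<in>F. \<forall>y\<in>F. x + y \<in> F \<and> x * y \<in> F) \<and>
     (\<forall>x\<in>F. - x \<in> F \<and> inverse x \<in> F)"

definition prime_power :: "nat \<Rightarrow> bool" where
  "prime_power q \<longleftrightarrow> (\<exists>p e. prime p \<and> e > 0 \<and> q = p ^ e)"

definition gauss_binom :: "nat \<Rightarrow> nat \<Rightarrow> nat \<Rightarrow> real" where
  "gauss_binom q a b = (if b \<le> a then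
      (\<Prod>i<b. (real q ^ (a - i) - 1) / (real q ^ (i + 1) - 1)) else 0)"

definition F_indep :: "'a::field set \<Rightarrow> (nat \<Rightarrow> 'a) \<Rightarrow> nat set \<Rightarrow> bool" where
  "F_indep F v J \<longleftrightarrow> (\<forall>c. (\<forall>j\<in>J. c j \<in> F) \<and> (\<Sum>j\<in>J. c j * v j) = 0 \<longrightarrow> (\<forall>j\<in>J. c j = 0))"

text \<open>Rank of v in F_{q^m}^n: the column rank over F_q of its coordinate matrix,
  i.e. the maximal number of F_q-linearly independent entries v_1..v_n.\<close>
definition rank_R :: "'a::field set \<Rightarrow> nat \<Rightarrow> (nat \<Rightarrow> 'a) \<Rightarrow> nat" where
  "rank_R F n v = Max {card J | J. J \<subseteq> {..<n} \<and> F_indep F v J}"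

definition rank_dist :: "'a::field set \<Rightarrow> nat \<Rightarrow> (nat \<Rightarrow> 'a) \<Rightarrow> (nat \<Rightarrow> 'a) \<Rightarrow> nat" where
  "rank_dist F n u v = rank_R F n (\<lambda>j. u j - v j)"

definition min_rank_dist :: "'a::field set \<Rightarrow> nat \<Rightarrow> (nat \<Rightarrow> 'a) set \<Rightarrow> nat" where
  "min_rank_dist F n C = Min {rank_dist F n u v | u v. u \<in> C \<and> v \<in> C \<and> u \<noteq> v}"

definition is_MRD :: "'a::field set \<Rightarrow> nat \<Rightarrow> nat \<Rightarrow> (nat \<Rightarrow> 'a) set \<Rightarrow> bool" where
  "is_MRD F n k C \<longleftrightarrow> min_rank_dist F n C = n - k + 1"

text \<open>Generator matrix [I_k | X] (k x n) and its row space over F_{q^m};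
  vectors of length n are functions nat => 'a that vanish from index n on.\<close>
definition gen_IX :: "nat \<Rightarrow> (nat \<Rightarrow> nat \<Rightarrow> 'a::field) \<Rightarrow> nat \<Rightarrow> nat \<Rightarrow> 'a" where
  "gen_IX k X i j = (if j < k then (if i = j then 1 else 0) else X i (j - k))"

definition row_space :: "nat \<Rightarrow> nat \<Rightarrow> (nat \<Rightarrow> nat \<Rightarrow> 'a::field) \<Rightarrow> (nat \<Rightarrow> 'a) set" where
  "row_space k n G = {(\<lambda>j. if j < n then (\<Sum>i<k. u i * G i j) else 0) | u. True}"

end

theory Submission
  imports Defs
begin

definition wgt :: "nat set \<Rightarrow> nat" where
  "wgt S = (\<Sum>j\<in>S. card {i. i<j \<and> i\<notin>S})"

definition gsum :: "nat \<Rightarrow> nat \<Rightarrow> nat \<Rightarrow> real" where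
  "gsum q a b = (\<Sum>S\<in>{S. S\<subseteq>{..<a} \<and> card S = b}. real q ^ wgt S)"

lemma gauss_binom_0 [simp]: "gauss_binom q a 0 = 1"
  by (simp add: gauss_binom_def)

lemma gauss_binom_0_Suc [simp]: "gauss_binom q 0 (Suc b) = 0"
  by (simp add: gauss_binom_def)

lemma gauss_binom_Suc_Suc:
  assumes "q \<ge> 2"
  shows "gauss_binom q (Suc a) (Suc b) = gauss_binom q a (Suc b) + real q ^ (a - b) * gauss_binom q a b"
proof (cases "b \<le> a")
  case False thus ?thesis by (simp add: gauss_binom_def)
next
  case True
  have qq: "real q > 1" using assms by simp
  have nz: "real q ^ (i+1) - 1 \<noteq> 0" for i
    using qq by (metis add_gr_0 less_irrefl one_less_power zero_less_one eq_iff_diff_eq_0)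
  have pos: "real q ^ (i+1) - 1 > 0" for i
    using one_less_power[OF qq, of "i+1"] by simp
  define P where "P = (\<Prod>i<b. (real q ^ (a - i) - 1) / (real q ^ (i + 1) - 1))"
  have gb: "gauss_binom q a b = P" using True by (simp add: gauss_binom_def P_def)
  define N where "N = (\<Prod>i<b. (real q ^ (a - i) - 1))"
  define D where "D = (\<Prod>i<b. (real q ^ (i + 1) - 1))"
  have Dpos: "D > 0" unfolding D_def using pos by (intro prod_pos) auto
  have PND: "P = N / D" unfolding P_def N_def D_def by (simp add: prod_dividef)
  have N1: "(\<Prod>i<Suc b. (real q ^ (Suc a - i) - 1)) = (real q ^ (Suc a) - 1) * N"
    unfolding N_def by (subst prod.lessThan_Suc_shift) simp
  have D1: "(\<Prod>i<Suc b. (real q ^ (i + 1) - 1)) = D * (real q ^ (Suc b) - 1)"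
    unfolding D_def by simp
  have L: "gauss_binom q (Suc a) (Suc b) = P * (real q ^ (Suc a) - 1) / (real q ^ (Suc b) - 1)"
  proof -
    have "gauss_binom q (Suc a) (Suc b) = (\<Prod>i<Suc b. (real q ^ (Suc a - i) - 1)) / (\<Prod>i<Suc b. (real q ^ (i + 1) - 1))"
      using True by (simp add: gauss_binom_def prod_dividef)
    also have "\<dots> = P * (real q ^ (Suc a) - 1) / (real q ^ (Suc b) - 1)"
      unfolding N1 D1 PND by simp
    finally show ?thesis .
  qed
  show ?thesis
  proof (cases "b = a")
    case True
    thus ?thesis using L nz[of a] gb by (simp add: gauss_binom_def)
  next
    case False
    hence ba: "Suc b \<le> a" using True by simp
    have R: "gauss_binom q a (Suc b) = P * (real q ^ (a - b) - 1) / (real q ^ (Suc b) - 1)"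
      using ba by (simp add: gauss_binom_def P_def)
    have e: "real q ^ (Suc a) = real q ^ (a - b) * real q ^ (Suc b)"
      using ba by (simp flip: power_add)
    define x where "x = real q ^ (a - b)"
    define y where "y = real q ^ (Suc b)"
    have y1: "y - 1 \<noteq> 0" using nz[of b] by (simp add: y_def)
    have "P * (x * y - 1) / (y - 1) = P * (x - 1) / (y - 1) + x * P"
      using y1 by (simp add: field_simps)
    thus ?thesis using L R gb e unfolding x_def[symmetric] y_def[symmetric] by (simp add: mult.commute)
  qed
qed

lemma wgt_insert:
  assumes "S \<subseteq> {..<a}"
  shows "wgt (insert a S) = wgt S + (a - card S)"
proof -
  have fin: "finite S" using assms finite_subset by blast
  have aS: "a \<notin> S" using assms by auto
  have "wgt (insert a S) = card {i. i<a \<and> i\<notin>insert a S} + (\<Sum>j\<in>S. card {i. i<j \<and> i\<notin>insert a S})"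
    unfolding wgt_def using fin aS by simp
  also have "(\<Sum>j\<in>S. card {i. i<j \<and> i\<notin>insert a S}) = wgt S"
    unfolding wgt_def
  proof (rule sum.cong)
    fix j assume "j \<in> S"
    hence "j < a" using assms by auto
    thus "card {i. i<j \<and> i\<notin>insert a S} = card {i. i<j \<and> i\<notin>S}"
      by (intro arg_cong[where f=card]) auto
  qed simp
  also have "{i. i<a \<and> i\<notin>insert a S} = {..<a} - S" by auto
  also have "card ({..<a} - S) = a - card S" using assms fin by (simp add: card_Diff_subset)
  finally show ?thesis by simp
qed

lemma subsets_Suc_split:
  "{S. S\<subseteq>{..<Suc a} \<and> card S = Suc b} =
   {S. S\<subseteq>{..<a} \<and> card S = Suc b} \<union> insert a ` {S. S\<subseteq>{..<a} \<and> card S = b}"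
proof (rule set_eqI, rule iffI)
  fix S assume S: "S \<in> {S. S\<subseteq>{..<Suc a} \<and> card S = Suc b}"
  show "S \<in> {S. S\<subseteq>{..<a} \<and> card S = Suc b} \<union> insert a ` {S. S\<subseteq>{..<a} \<and> card S = b}"
  proof (cases "a \<in> S")
    case True
    have "S - {a} \<subseteq> {..<a}" using S by auto
    moreover have "card (S - {a}) = b" using S True by (simp add: card_Diff_singleton)
    moreover have "S = insert a (S - {a})" using True by auto
    ultimately show ?thesis by blast
  next
    case False
    hence "S \<subseteq> {..<a}" using S by (auto simp: less_Suc_eq)
    thus ?thesis using S by blast
  qed
next
  fix S assume "S \<in> {S. S\<subseteq>{..<a} \<and> card S = Suc b} \<union> insert a ` {S. S\<subseteq>{..<a} \<and> card S = b}"
  thus "S \<in> {S. S\<subseteq>{..<Suc a} \<and> card S = Suc b}"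
  proof
    assume "S \<in> {S. S\<subseteq>{..<a} \<and> card S = Suc b}" thus ?thesis by auto
  next
    assume "S \<in> insert a ` {S. S\<subseteq>{..<a} \<and> card S = b}"
    then obtain T where T: "T \<subseteq> {..<a}" "card T = b" "S = insert a T" by auto
    have "finite T" using T(1) finite_subset by blast
    moreover have "a \<notin> T" using T(1) by auto
    ultimately show ?thesis using T by auto
  qed
qed

lemma gsum_Suc_Suc: "gsum q (Suc a) (Suc b) = gsum q a (Suc b) + real q ^ (a - b) * gsum q a b"
proof -
  let ?A = "{S. S\<subseteq>{..<a} \<and> card S = Suc b}"
  let ?B = "{S. S\<subseteq>{..<a} \<and> card S = b}"
  have finA: "finite ?A" by (rule finite_subset[of _ "Pow {..<a}"]) auto
  have finB: "finite ?B" by (rule finite_subset[of _ "Pow {..<a}"]) auto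
  have disj: "?A \<inter> insert a ` ?B = {}" by auto
  have inj: "inj_on (insert a) ?B"
    by (rule inj_onI) (metis (no_types, lifting) Diff_insert_absorb lessThan_iff less_irrefl mem_Collect_eq subsetD)
  have "gsum q (Suc a) (Suc b) = (\<Sum>S\<in>?A. real q ^ wgt S) + (\<Sum>S\<in>insert a ` ?B. real q ^ wgt S)"
    unfolding gsum_def subsets_Suc_split using finA finB disj by (simp add: sum.union_disjoint)
  also have "(\<Sum>S\<in>insert a ` ?B. real q ^ wgt S) = (\<Sum>S\<in>?B. real q ^ wgt (insert a S))"
    using inj by (simp add: sum.reindex)
  also have "\<dots> = (\<Sum>S\<in>?B. real q ^ (a - b) * real q ^ wgt S)"
    by (rule sum.cong) (auto simp: wgt_insert power_add)
  finally show ?thesis by (simp add: gsum_def sum_distrib_left)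
qed

lemma gsum_0 [simp]: "gsum q a 0 = 1"
proof -
  have "{S. S\<subseteq>{..<a} \<and> card S = 0} = {{}}"
  proof (rule set_eqI, rule iffI)
    fix S assume "S \<in> {S. S\<subseteq>{..<a} \<and> card S = 0}"
    moreover hence "finite S" using finite_subset by blast
    ultimately show "S \<in> {{}}" by simp
  qed auto
  thus ?thesis by (simp add: gsum_def wgt_def)
qed

lemma gsum_0_Suc [simp]: "gsum q 0 (Suc b) = 0"
  unfolding gsum_def
proof -
  have "{S. S\<subseteq>{..<0::nat} \<and> card S = Suc b} = {}" by auto
  thus "(\<Sum>S\<in>{S. S\<subseteq>{..<0::nat} \<and> card S = Suc b}. real q ^ wgt S) = 0" by (simp only:) simp
qed

lemma gsum_gauss: "q \<ge> 2 \<Longrightarrow> gsum q a b = gauss_binom q a b"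
proof (induction a arbitrary: b)
  case 0 thus ?case by (cases b) auto
next
  case (Suc a) thus ?case by (cases b) (auto simp: gsum_Suc_Suc gauss_binom_Suc_Suc)
qed

lemma wgt_split:
  assumes S1: "S1 \<subseteq> {..<k}"
  and fin2: "finite S2"
  shows "wgt (S1 \<union> (\<lambda>x. x + k) ` S2) = wgt S1 + card S2 * (k - card S1) + wgt S2"
proof -
  let ?T = "(\<lambda>x. x + k) ` S2"
  let ?S = "S1 \<union> ?T"
  have fin1: "finite S1" using S1 finite_subset by blast
  have disj: "S1 \<inter> ?T = {}" using S1 by auto
  have injk: "inj_on (\<lambda>x. x + k) A" for A by (rule inj_onI) simp
  have "wgt ?S = (\<Sum>j\<in>S1. card {i. i<j \<and> i\<notin>?S}) + (\<Sum>j\<in>?T. card {i. i<j \<and> i\<notin>?S})"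
    unfolding wgt_def using fin1 fin2 disj by (simp add: sum.union_disjoint)
  also have "(\<Sum>j\<in>S1. card {i. i<j \<and> i\<notin>?S}) = wgt S1"
    unfolding wgt_def
  proof (rule sum.cong)
    fix j assume "j \<in> S1"
    hence "j < k" using S1 by auto
    thus "card {i. i<j \<and> i\<notin>?S} = card {i. i<j \<and> i\<notin>S1}"
      by (intro arg_cong[where f=card]) auto
  qed simp
  also have "(\<Sum>j\<in>?T. card {i. i<j \<and> i\<notin>?S}) = (\<Sum>x\<in>S2. card {i. i<x+k \<and> i\<notin>?S})"
    using injk by (simp add: sum.reindex)
  also have "\<dots> = (\<Sum>x\<in>S2. (k - card S1) + card {i. i<x \<and> i\<notin>S2})"
  proof (rule sum.cong)
    fix x assume "x \<in> S2"
    have e: "{i. i<x+k \<and> i\<notin>?S} = ({..<k} - S1) \<union> (\<lambda>x. x + k) ` {i. i<x \<and> i\<notin>S2}"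
    proof (rule set_eqI, rule iffI)
      fix i assume i: "i \<in> {i. i<x+k \<and> i\<notin>?S}"
      show "i \<in> ({..<k} - S1) \<union> (\<lambda>x. x + k) ` {i. i<x \<and> i\<notin>S2}"
      proof (cases "i < k")
        case True thus ?thesis using i by auto
      next
        case False
        hence "i = (i - k) + k" by simp
        moreover have "i - k < x" using i False by (simp add: less_diff_conv2)
        moreover have "i - k \<notin> S2"
        proof
          assume "i - k \<in> S2"
          hence "i \<in> ?T" using \<open>i = (i - k) + k\<close> by (metis image_eqI)
          thus False using i by simp
        qed
        ultimately show ?thesis by blast
      qed
    next
      fix i assume "i \<in> ({..<k} - S1) \<union> (\<lambda>x. x + k) ` {i. i<x \<and> i\<notin>S2}"
      thus "i \<in> {i. i<x+k \<and> i\<notin>?S}" using S1 by auto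
    qed
    have d: "({..<k} - S1) \<inter> (\<lambda>x. x + k) ` {i. i<x \<and> i\<notin>S2} = {}" by auto
    have "card {i. i<x+k \<and> i\<notin>?S} = card ({..<k} - S1) + card ((\<lambda>x. x + k) ` {i. i<x \<and> i\<notin>S2})"
      unfolding e using d by (intro card_Un_disjoint) auto
    also have "card ({..<k} - S1) = k - card S1" using S1 fin1 by (simp add: card_Diff_subset)
    also have "card ((\<lambda>x. x + k) ` {i. i<x \<and> i\<notin>S2}) = card {i. i<x \<and> i\<notin>S2}"
      using injk by (simp add: card_image)
    finally show "card {i. i<x+k \<and> i\<notin>?S} = (k - card S1) + card {i. i<x \<and> i\<notin>S2}" .
  qed simp
  also have "\<dots> = card S2 * (k - card S1) + wgt S2"
    by (simp add: sum.distrib wgt_def)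
  finally show ?thesis by simp
qed

lemma sum_identity:
  assumes kn: "k \<le> n"
  shows "(\<Sum>S\<in>{S. S\<subseteq>{..<n} \<and> card S = k}. real (card (S \<inter> {k..<n})) * real q ^ wgt S)
       = (\<Sum>r=0..k. real r * gsum q k (k-r) * gsum q (n-k) r * real q ^ (r^2))"
proof -
  define A where "A r = {S1. S1\<subseteq>{..<k} \<and> card S1 = k-r}" for r
  define B where "B r = {S2. S2\<subseteq>{..<n-k} \<and> card S2 = r}" for r
  define Sg where "Sg = Sigma {0..k} (\<lambda>r. A r \<times> B r)"
  define h where "h = (\<lambda>(r::nat,(S1::nat set,S2::nat set)). S1 \<union> (\<lambda>x. x + k) ` S2)"
  define g where "g = (\<lambda>S. (card {x. x+k \<in> S}, (S \<inter> {..<k}, {x. x+k \<in> S})))"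
  define Sub where "Sub = {S. S\<subseteq>{..<n} \<and> card S = k}"
  have injk: "inj_on (\<lambda>x. x + k) X" for X by (rule inj_onI) simp
  have finA: "finite (A r)" for r unfolding A_def by (rule finite_subset[of _ "Pow {..<k}"]) auto
  have finB: "finite (B r)" for r unfolding B_def by (rule finite_subset[of _ "Pow {..<n-k}"]) auto
  have cardsplit: "card S = card (S \<inter> {..<k}) + card {x. x+k \<in> S}" if "finite S" for S
  proof -
    have e: "S = (S \<inter> {..<k}) \<union> (\<lambda>x. x + k) ` {x. x+k \<in> S}"
    proof (rule set_eqI, rule iffI)
      fix y assume y: "y \<in> S"
      show "y \<in> (S \<inter> {..<k}) \<union> (\<lambda>x. x + k) ` {x. x+k \<in> S}"
      proof (cases "y < k")
        case False hence "y = (y - k) + k" by simp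
        thus ?thesis using y by (metis (mono_tags, lifting) UnI2 image_eqI mem_Collect_eq)
      qed (use y in auto)
    qed auto
    have fin2: "finite {x. x+k \<in> S}"
      using finite_imageD[of "\<lambda>x. x + k"] that
      by (metis (no_types, lifting) finite_subset image_Collect_subsetI injk)
    have "card S = card (S \<inter> {..<k}) + card ((\<lambda>x. x + k) ` {x. x+k \<in> S})"
      by (subst e, rule card_Un_disjoint) (use that fin2 in auto)
    thus ?thesis using injk by (simp add: card_image)
  qed
  have hg: "bij_betw h Sg Sub"
  proof (rule bij_betw_byWitness[where f'=g])
    show "\<forall>a\<in>Sg. g (h a) = a"
    proof
      fix a assume "a \<in> Sg"
      then obtain r S1 S2 where a: "a = (r,(S1,S2))" "S1 \<subseteq> {..<k}" "card S2 = r"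
        unfolding Sg_def A_def B_def by auto
      have e1: "(S1 \<union> (\<lambda>x. x + k) ` S2) \<inter> {..<k} = S1" using a by auto
      have e2: "{x. x+k \<in> S1 \<union> (\<lambda>x. x + k) ` S2} = S2" using a by auto
      show "g (h a) = a" unfolding a h_def g_def using e1 e2 a by simp
    qed
    show "\<forall>a\<in>Sub. h (g a) = a"
    proof
      fix S assume "S \<in> Sub"
      have "(S \<inter> {..<k}) \<union> (\<lambda>x. x + k) ` {x. x+k \<in> S} = S"
      proof (rule set_eqI, rule iffI)
        fix y assume y: "y \<in> S"
        show "y \<in> (S \<inter> {..<k}) \<union> (\<lambda>x. x + k) ` {x. x+k \<in> S}"
        proof (cases "y < k")
          case False hence "y = (y - k) + k" by simp
          thus ?thesis using y by (metis (mono_tags, lifting) UnI2 image_eqI mem_Collect_eq)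
        qed (use y in auto)
      qed auto
      thus "h (g S) = S" unfolding h_def g_def by simp
    qed
    show "h ` Sg \<subseteq> Sub"
    proof
      fix S assume "S \<in> h ` Sg"
      then obtain r S1 S2 where r: "r \<le> k" and a: "S = S1 \<union> (\<lambda>x. x + k) ` S2" "S1 \<subseteq> {..<k}" "card S1 = k - r"
         "S2 \<subseteq> {..<n-k}" "card S2 = r"
        unfolding Sg_def A_def B_def h_def by auto
      have f1: "finite S1" "finite S2" using a finite_subset by blast+
      have "S \<subseteq> {..<n}" using a kn by auto
      moreover have "card S = k"
        unfolding a(1) using f1 a r by (subst card_Un_disjoint) (auto simp: card_image[OF injk])
      ultimately show "S \<in> Sub" unfolding Sub_def by simp
    qed
    show "g ` Sub \<subseteq> Sg"
    proof
      fix p assume "p \<in> g ` Sub"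
      then obtain S where S: "S \<subseteq> {..<n}" "card S = k" "p = g S" unfolding Sub_def by auto
      have fS: "finite S" using S finite_subset by blast
      have c: "card S = card (S \<inter> {..<k}) + card {x. x+k \<in> S}" by (rule cardsplit[OF fS])
      have "{x. x+k \<in> S} \<subseteq> {..<n-k}" using S by auto
      thus "p \<in> Sg" unfolding S(3) g_def Sg_def A_def B_def using c S by auto
    qed
  qed
  have "(\<Sum>S\<in>Sub. real (card (S \<inter> {k..<n})) * real q ^ wgt S)
     = (\<Sum>p\<in>Sg. real (card (h p \<inter> {k..<n})) * real q ^ wgt (h p))"
    using sum.reindex_bij_betw[OF hg, of "\<lambda>S. real (card (S \<inter> {k..<n})) * real q ^ wgt S"] by simp
  also have "\<dots> = (\<Sum>p\<in>Sg. (case p of (r,(S1,S2)) \<Rightarrow> real r * real q ^ (r^2) * (real q ^ wgt S1 * real q ^ wgt S2)))"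
  proof (rule sum.cong[OF refl])
    fix p assume "p \<in> Sg"
    then obtain r S1 S2 where r: "r \<le> k" and a: "p = (r,(S1,S2))" "S1 \<subseteq> {..<k}" "card S1 = k - r"
         "S2 \<subseteq> {..<n-k}" "card S2 = r"
      unfolding Sg_def A_def B_def by auto
    have f2: "finite S2" using a finite_subset by blast
    have "h p \<inter> {k..<n} = (\<lambda>x. x + k) ` S2" unfolding a h_def using a kn by auto
    hence c: "card (h p \<inter> {k..<n}) = r" using a by (simp add: card_image[OF injk])
    have w: "wgt (h p) = wgt S1 + r * r + wgt S2"
      unfolding a h_def using wgt_split[OF a(2) f2] a r by simp
    show "real (card (h p \<inter> {k..<n})) * real q ^ wgt (h p) =
        (case p of (r,(S1,S2)) \<Rightarrow> real r * real q ^ (r^2) * (real q ^ wgt S1 * real q ^ wgt S2))"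
      unfolding c w using a by (simp add: power_add power2_eq_square)
  qed
  also have "\<dots> = (\<Sum>r\<in>{0..k}. \<Sum>p\<in>A r \<times> B r. (case p of (S1,S2) \<Rightarrow> real r * real q ^ (r^2) * (real q ^ wgt S1 * real q ^ wgt S2)))"
    unfolding Sg_def by (subst sum.Sigma) (auto simp: finA finB split_def)
  also have "\<dots> = (\<Sum>r\<in>{0..k}. real r * real q ^ (r^2) * ((\<Sum>S1\<in>A r. real q ^ wgt S1) * (\<Sum>S2\<in>B r. real q ^ wgt S2)))"
  proof (rule sum.cong[OF refl])
    fix r
    have "(\<Sum>S1\<in>A r. real q ^ wgt S1) * (\<Sum>S2\<in>B r. real q ^ wgt S2)
        = (\<Sum>p\<in>A r \<times> B r. real q ^ wgt (fst p) * real q ^ wgt (snd p))"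
      by (simp add: sum_product sum.cartesian_product split_def)
    thus "(\<Sum>p\<in>A r \<times> B r. (case p of (S1,S2) \<Rightarrow> real r * real q ^ (r^2) * (real q ^ wgt S1 * real q ^ wgt S2)))
      = real r * real q ^ (r^2) * ((\<Sum>S1\<in>A r. real q ^ wgt S1) * (\<Sum>S2\<in>B r. real q ^ wgt S2))"
      by (simp add: sum_distrib_left split_def)
  qed
  also have "\<dots> = (\<Sum>r=0..k. real r * gsum q k (k-r) * gsum q (n-k) r * real q ^ (r^2))"
    unfolding gsum_def A_def B_def by (simp add: mult_ac)
  finally show ?thesis unfolding Sub_def .
qed

definition spanF :: "'a::field set \<Rightarrow> (nat \<Rightarrow> 'a) \<Rightarrow> nat set \<Rightarrow> 'a set" where
  "spanF F c I = {\<Sum>i\<in>I. a i * c i | a. \<forall>i\<in>I. a i \<in> F}"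

definition Tset :: "nat set \<Rightarrow> (nat \<times> nat) set" where
  "Tset S = Sigma S (\<lambda>j. {i. i<j \<and> i\<notin>S})"

lemma subfield_mult: "subfield F \<Longrightarrow> x \<in> F \<Longrightarrow> y \<in> F \<Longrightarrow> x * y \<in> F"
  by (simp add: subfield_def)
lemma subfield_uminus: "subfield F \<Longrightarrow> x \<in> F \<Longrightarrow> - x \<in> F"
  by (simp add: subfield_def)
lemma subfield_inverse: "subfield F \<Longrightarrow> x \<in> F \<Longrightarrow> inverse x \<in> F"
  by (simp add: subfield_def)
lemma subfield_0: "subfield F \<Longrightarrow> 0 \<in> F"
  by (simp add: subfield_def)

lemma F_indep_insert:
  assumes sf: "subfield F" and fin: "finite J" and ind: "F_indep F c J" and jJ: "j \<notin> J"
    and ns: "c j \<notin> spanF F c J"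
  shows "F_indep F c (insert j J)"
  unfolding F_indep_def
proof (intro allI impI)
  fix a assume a: "(\<forall>i\<in>insert j J. a i \<in> F) \<and> (\<Sum>i\<in>insert j J. a i * c i) = 0"
  have s: "a j * c j + (\<Sum>i\<in>J. a i * c i) = 0" using a fin jJ by simp
  have aj: "a j = 0"
  proof (rule ccontr)
    assume nz: "a j \<noteq> 0"
    define b where "b i = - a i * inverse (a j)" for i
    have "(\<Sum>i\<in>J. b i * c i) = - inverse (a j) * (\<Sum>i\<in>J. a i * c i)"
      unfolding b_def by (simp add: sum_distrib_left mult_ac)
    also have "(\<Sum>i\<in>J. a i * c i) = - (a j * c j)" using s by (metis add.commute eq_neg_iff_add_eq_0)
    finally have "(\<Sum>i\<in>J. b i * c i) = c j" using nz by simp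
    moreover have "\<forall>i\<in>J. b i \<in> F" unfolding b_def using a sf
      by (auto intro!: subfield_mult subfield_uminus subfield_inverse)
    ultimately have "c j \<in> spanF F c J" unfolding spanF_def by (intro CollectI exI[of _ b]) simp
    thus False using ns by simp
  qed
  hence "(\<Sum>i\<in>J. a i * c i) = 0" using s by simp
  moreover have "\<forall>i\<in>J. a i \<in> F" using a by simp
  ultimately have "\<forall>i\<in>J. a i = 0" using ind[unfolded F_indep_def, rule_format, of a] by blast
  thus "\<forall>i\<in>insert j J. a i = 0" using aj by simp
qed

lemma greedy_basis:
  assumes sf: "subfield F"
  shows "\<exists>J\<subseteq>{..<n}. F_indep F c J \<and> (\<forall>j<n. j\<notin>J \<longrightarrow> c j \<in> spanF F c {i\<in>J. i<j})"
proof (induction n)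
  case 0 show ?case by (intro exI[of _ "{}"]) (simp add: F_indep_def)
next
  case (Suc n)
  then obtain J where J: "J \<subseteq> {..<n}" "F_indep F c J" "\<forall>j<n. j\<notin>J \<longrightarrow> c j \<in> spanF F c {i\<in>J. i<j}"
    by blast
  have fin: "finite J" using J(1) finite_subset by blast
  have eqJ: "{i\<in>J. i<n} = J" using J(1) by auto
  show ?case
  proof (cases "c n \<in> spanF F c J")
    case True
    have "\<forall>j<Suc n. j\<notin>J \<longrightarrow> c j \<in> spanF F c {i\<in>J. i<j}"
    proof (intro allI impI)
      fix j assume j: "j < Suc n" "j \<notin> J"
      show "c j \<in> spanF F c {i\<in>J. i<j}"
      proof (cases "j = n")
        case True thus ?thesis using eqJ \<open>c n \<in> spanF F c J\<close> by simp
      next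
        case False thus ?thesis using j J(3) by simp
      qed
    qed
    moreover have "J \<subseteq> {..<Suc n}" using J(1) by auto
    ultimately show ?thesis using J(2) by blast
  next
    case False
    have nJ: "n \<notin> J" using J(1) by auto
    have ind: "F_indep F c (insert n J)" by (rule F_indep_insert[OF sf fin J(2) nJ False])
    have "\<forall>j<Suc n. j\<notin>insert n J \<longrightarrow> c j \<in> spanF F c {i\<in>insert n J. i<j}"
    proof (intro allI impI)
      fix j assume j: "j < Suc n" "j \<notin> insert n J"
      hence "j < n" by auto
      moreover have "{i\<in>insert n J. i<j} = {i\<in>J. i<j}" using \<open>j<n\<close> by auto
      ultimately show "c j \<in> spanF F c {i\<in>insert n J. i<j}" using J(3) j by auto
    qed
    thus ?thesis using ind J(1) by (intro exI[of _ "insert n J"]) auto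
  qed
qed

lemma rank_R_ge:
  assumes "J \<subseteq> {..<n}" "F_indep F c J"
  shows "card J \<le> rank_R F n c"
proof -
  have cle: "\<forall>J. J \<subseteq> {..<n} \<longrightarrow> card J \<le> n" using card_mono[of "{..<n}"] by fastforce
  have fin: "finite {card J |J. J \<subseteq> {..<n} \<and> F_indep F c J}"
    by (rule finite_subset[of _ "{..n}"]) (use cle in blast)+
  show ?thesis unfolding rank_R_def using assms by (intro Max_ge[OF fin]) blast
qed

lemma rank_R_le:
  "rank_R F n c \<le> n"
proof -
  have cle: "\<forall>J. J \<subseteq> {..<n} \<longrightarrow> card J \<le> n" using card_mono[of "{..<n}"] by fastforce
  have fin: "finite {card J |J. J \<subseteq> {..<n} \<and> F_indep F c J}"
    by (rule finite_subset[of _ "{..n}"]) (use cle in blast)+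
  have "card {} \<in> {card J |J. J \<subseteq> {..<n} \<and> F_indep F c J}"
    by (rule CollectI, rule exI[of _ "{}"]) (simp add: F_indep_def)
  hence ne: "{card J |J. J \<subseteq> {..<n} \<and> F_indep F c J} \<noteq> {}" by blast
  show ?thesis unfolding rank_R_def using fin ne
    by (subst Max_le_iff) (use cle in blast)+
qed

lemma rank_R_cong:
  assumes "\<And>j. j < n \<Longrightarrow> c j = c' j"
  shows "rank_R F n c = rank_R F n c'"
proof -
  have "F_indep F c J = F_indep F c' J" if "J \<subseteq> {..<n}" for J
  proof -
    have "(\<Sum>i\<in>J. a i * c i) = (\<Sum>i\<in>J. a i * c' i)" for a
      using that assms by (intro sum.cong) auto
    thus ?thesis unfolding F_indep_def by simp
  qed
  hence "{card J |J. J \<subseteq> {..<n} \<and> F_indep F c J} = {card J |J. J \<subseteq> {..<n} \<and> F_indep F c' J}"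
    by blast
  thus ?thesis unfolding rank_R_def by simp
qed

lemma witness_exists:
  assumes sf: "subfield F" and kn: "k \<le> n" and rk: "rank_R F n c \<le> n - k"
  shows "\<exists>S lam. S \<subseteq> {..<n} \<and> card S = k \<and> lam \<in> Tset S \<rightarrow>\<^sub>E F \<and>
           (\<forall>j\<in>S. c j = (\<Sum>i\<in>{i. i<j \<and> i\<notin>S}. lam (j,i) * c i))"
proof -
  obtain J where J: "J \<subseteq> {..<n}" "F_indep F c J" "\<forall>j<n. j\<notin>J \<longrightarrow> c j \<in> spanF F c {i\<in>J. i<j}"
    using greedy_basis[OF sf] by blast
  have cJ: "card J \<le> n - k" using rank_R_ge[OF J(1,2)] rk by simp
  have finJ: "finite J" using J(1) finite_subset by blast
  have "card ({..<n} - J) = n - card J" using J(1) finJ by (simp add: card_Diff_subset)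
  hence "k \<le> card ({..<n} - J)" using cJ kn by simp
  then obtain S where S: "S \<subseteq> {..<n} - J" "card S = k" by (meson obtain_subset_with_card_n)
  have ex: "\<forall>j\<in>S. \<exists>a. (\<forall>i\<in>{i\<in>J. i<j}. a i \<in> F) \<and> c j = (\<Sum>i\<in>{i\<in>J. i<j}. a i * c i)"
  proof
    fix j assume "j \<in> S"
    hence "j < n" "j \<notin> J" using S(1) by auto
    hence "c j \<in> spanF F c {i\<in>J. i<j}" using J(3) by blast
    thus "\<exists>a. (\<forall>i\<in>{i\<in>J. i<j}. a i \<in> F) \<and> c j = (\<Sum>i\<in>{i\<in>J. i<j}. a i * c i)"
      unfolding spanF_def by blast
  qed
  obtain A where A: "\<forall>j\<in>S. (\<forall>i\<in>{i\<in>J. i<j}. A j i \<in> F) \<and> c j = (\<Sum>i\<in>{i\<in>J. i<j}. A j i * c i)"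
    using bchoice[OF ex] by blast
  define lam where "lam = (\<lambda>p\<in>Tset S. if snd p \<in> J then A (fst p) (snd p) else 0)"
  have lamv: "lam (j,i) = (if i \<in> J then A j i else 0)" if "j \<in> S" "i < j" "i \<notin> S" for j i
    using that unfolding lam_def Tset_def by simp
  have lamE: "lam \<in> Tset S \<rightarrow>\<^sub>E F"
    unfolding lam_def
  proof (rule restrict_PiE_iff[THEN iffD2], rule ballI)
    fix p assume p: "p \<in> Tset S"
    then obtain j i where ji: "p = (j,i)" "j \<in> S" "i < j" "i \<notin> S" unfolding Tset_def by blast
    show "(if snd p \<in> J then A (fst p) (snd p) else 0) \<in> F"
      using A ji subfield_0[OF sf] by simp
  qed
  have "\<forall>j\<in>S. c j = (\<Sum>i\<in>{i. i<j \<and> i\<notin>S}. lam (j,i) * c i)"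
  proof
    fix j assume j: "j \<in> S"
    have sub: "{i\<in>J. i<j} \<subseteq> {i. i<j \<and> i\<notin>S}" using S(1) by blast
    have "(\<Sum>i\<in>{i. i<j \<and> i\<notin>S}. lam (j,i) * c i) = (\<Sum>i\<in>{i\<in>J. i<j}. lam (j,i) * c i)"
    proof (rule sum.mono_neutral_right[OF _ sub])
      show "finite {i. i<j \<and> i\<notin>S}" by simp
      show "\<forall>i\<in>{i. i<j \<and> i\<notin>S} - {i\<in>J. i<j}. lam (j,i) * c i = 0"
      proof
        fix i assume "i \<in> {i. i<j \<and> i\<notin>S} - {i\<in>J. i<j}"
        hence "i<j" "i\<notin>S" "i\<notin>J" by auto
        thus "lam (j,i) * c i = 0" by (simp add: lamv[OF j])
      qed
    qed
    also have "\<dots> = (\<Sum>i\<in>{i\<in>J. i<j}. A j i * c i)"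
    proof (rule sum.cong[OF refl])
      fix i assume i: "i \<in> {i\<in>J. i<j}"
      hence "i \<notin> S" using S(1) by blast
      thus "lam (j,i) * c i = A j i * c i" using lamv[OF j] i by simp
    qed
    also have "\<dots> = c j" using A j by simp
    finally show "c j = (\<Sum>i\<in>{i. i<j \<and> i\<notin>S}. lam (j,i) * c i)" by simp
  qed
  moreover have "S \<subseteq> {..<n}" using S(1) by blast
  ultimately show ?thesis using S(2) lamE by blast
qed

lemma F_indep_nonzero:
  assumes sf: "subfield F" and fin: "finite J" and ind: "F_indep F w J" and j: "j \<in> J"
  shows "w j \<noteq> 0"
proof
  assume w0: "w j = 0"
  define a where "a i = (if i = j then (1::'a) else 0)" for i
  have "(\<Sum>i\<in>J. a i * w i) = (\<Sum>i\<in>J. if i = j then w i else 0)"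
    by (rule sum.cong) (auto simp: a_def)
  also have "\<dots> = w j" using fin j by simp
  finally have "(\<Sum>i\<in>J. a i * w i) = w j" .
  moreover have "\<forall>i\<in>J. a i \<in> F" unfolding a_def using sf by (simp add: subfield_def)
  ultimately have "\<forall>i\<in>J. a i = 0" using ind w0 unfolding F_indep_def by metis
  hence "a j = 0" using j by blast
  thus False by (simp add: a_def)
qed

definition cw :: "nat \<Rightarrow> (nat \<Rightarrow> nat \<Rightarrow> 'a::field) \<Rightarrow> (nat \<Rightarrow> 'a) \<Rightarrow> nat \<Rightarrow> 'a" where
  "cw k G u = (\<lambda>j. \<Sum>i<k. u i * G i j)"

lemma nonMRD_low:
  assumes sf: "subfield F" and k1: "1 \<le> k" and kn: "k < n"
    and nm: "\<not> is_MRD F n k (row_space k n (gen_IX k X))"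
  shows "\<exists>d. (\<exists>l<k. d l \<noteq> 0) \<and> rank_R F n (cw k (gen_IX k X) d) \<le> n - k"
proof -
  define G where "G = gen_IX k X"
  define C where "C = row_space k n G"
  define D where "D = {rank_dist F n u v |u v. u \<in> C \<and> v \<in> C \<and> u \<noteq> v}"
  define vec where "vec u = (\<lambda>j. if j < n then (\<Sum>i<k. u i * G i j) else 0)" for u
  have Cvec: "C = {vec u | u. True}" unfolding C_def row_space_def vec_def by simp
  have finD: "finite D"
    by (rule finite_subset[of _ "{..n}"]) (auto simp: D_def rank_dist_def rank_R_le)
  define e0 where "e0 = (\<lambda>i::nat. if i = 0 then (1::'a) else 0)"
  define z0 where "z0 = (\<lambda>i::nat. (0::'a))"
  have ve0: "vec e0 j = G 0 j" if "j < n" for j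
  proof -
    have "vec e0 j = (\<Sum>i<k. e0 i * G i j)" unfolding vec_def using that by simp
    also have "\<dots> = (\<Sum>i<k. if i = 0 then G 0 j else 0)"
      by (rule sum.cong) (auto simp: e0_def)
    also have "\<dots> = G 0 j" using k1 by simp
    finally show ?thesis .
  qed
  have vz0: "vec z0 j = 0" for j unfolding vec_def z0_def by simp
  have ne: "vec e0 \<noteq> vec z0"
  proof
    assume "vec e0 = vec z0"
    hence "vec e0 0 = vec z0 0" by simp
    moreover have "vec e0 0 = 1" using ve0[of 0] k1 kn unfolding G_def gen_IX_def by simp
    moreover have "vec z0 0 = 0" by (rule vz0)
    ultimately show False by simp
  qed
  have small: "rank_dist F n (vec e0) (vec z0) \<le> n - k + 1"
  proof -
    define w where "w = (\<lambda>j. vec e0 j - vec z0 j)"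
    have w0: "w j = 0" if "1 \<le> j" "j < k" for j
      using that kn ve0[of j] vz0[of j] unfolding w_def G_def gen_IX_def by simp
    have "card J \<le> n - k + 1" if J: "J \<subseteq> {..<n}" "F_indep F w J" for J
    proof -
      have fJ: "finite J" using J finite_subset by blast
      have "J \<subseteq> {0} \<union> {k..<n}"
      proof
        fix j assume jJ: "j \<in> J"
        have "w j \<noteq> 0" by (rule F_indep_nonzero[OF sf fJ J(2) jJ])
        thus "j \<in> {0} \<union> {k..<n}" using w0[of j] J(1) jJ by (cases "j = 0") force+
      qed
      hence "card J \<le> card ({0} \<union> {k..<n})" by (intro card_mono) auto
      also have "card ({0} \<union> {k..<n}) = n - k + 1" using k1 kn by (subst card_Un_disjoint) auto
      finally show ?thesis .
    qed
    hence "rank_R F n w \<le> n - k + 1"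
    proof -
      assume h: "\<And>J. J \<subseteq> {..<n} \<Longrightarrow> F_indep F w J \<Longrightarrow> card J \<le> n - k + 1"
      have fin: "finite {card J |J. J \<subseteq> {..<n} \<and> F_indep F w J}"
        by (rule finite_subset[of _ "{..n}"]) (auto simp: card_mono[of "{..<n}", simplified])
      have "card {} \<in> {card J |J. J \<subseteq> {..<n} \<and> F_indep F w J}"
        by (auto simp: F_indep_def intro!: exI[of _ "{}"])
      hence nee: "{card J |J. J \<subseteq> {..<n} \<and> F_indep F w J} \<noteq> {}" by blast
      show ?thesis unfolding rank_R_def using fin nee h by (subst Max_le_iff) auto
    qed
    thus ?thesis unfolding rank_dist_def w_def .
  qed
  have inD: "rank_dist F n (vec e0) (vec z0) \<in> D" unfolding D_def Cvec using ne by blast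
  have "min_rank_dist F n C \<noteq> n - k + 1" using nm unfolding is_MRD_def C_def G_def by simp
  moreover have "min_rank_dist F n C = Min D" unfolding min_rank_dist_def D_def by simp
  moreover have "Min D \<le> n - k + 1" using Min_le[OF finD inD] small by simp
  ultimately have mle: "Min D \<le> n - k" by simp
  have "Min D \<in> D" using finD inD by (intro Min_in) auto
  then obtain u v where uv0: "u \<in> C" "v \<in> C" "u \<noteq> v" "Min D = rank_dist F n u v"
    unfolding D_def by blast
  hence uv: "u \<in> C" "v \<in> C" "u \<noteq> v" "rank_dist F n u v \<le> n - k" using mle by auto
  then obtain a b where ab: "u = vec a" "v = vec b" unfolding Cvec by auto
  define d where "d = (\<lambda>i. a i - b i)"
  have "rank_dist F n u v = rank_R F n (cw k G d)"
    unfolding rank_dist_def ab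
    by (rule rank_R_cong) (simp add: vec_def cw_def d_def sum_subtractf left_diff_distrib)
  moreover have "\<exists>l<k. d l \<noteq> 0"
  proof (rule ccontr)
    assume "\<not> (\<exists>l<k. d l \<noteq> 0)"
    hence "\<forall>l<k. a l = b l" unfolding d_def by simp
    hence "vec a = vec b" unfolding vec_def by (intro ext) simp
    thus False using uv ab by simp
  qed
  ultimately show ?thesis using uv unfolding G_def by auto
qed

definition Mx :: "nat \<Rightarrow> (nat \<Rightarrow> nat \<Rightarrow> 'a::field) \<Rightarrow> nat set \<Rightarrow> (nat \<times> nat \<Rightarrow> 'a) \<Rightarrow> nat \<Rightarrow> nat \<Rightarrow> 'a" where
  "Mx k X S lam l j = gen_IX k X l j - (\<Sum>i\<in>{i. i<j \<and> i\<notin>S}. lam (j,i) * gen_IX k X l i)"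

definition Rset :: "nat set \<Rightarrow> nat \<Rightarrow> nat \<Rightarrow> nat set" where
  "Rset S k j0 = {j\<in>S. j<k \<or> j<j0}"

definition Ev :: "nat \<Rightarrow> (nat \<Rightarrow> nat \<Rightarrow> 'a::field) \<Rightarrow> nat set \<Rightarrow> (nat \<times> nat \<Rightarrow> 'a) \<Rightarrow> nat \<Rightarrow> bool" where
  "Ev k X S lam j0 \<longleftrightarrow> (\<exists>\<gamma>. \<forall>l<k. Mx k X S lam l j0 = (\<Sum>j\<in>Rset S k j0. \<gamma> j * Mx k X S lam l j))"

lemma fibre_count:
  assumes fin: "finite A"
    and full: "\<And>x. x \<in> A \<Longrightarrow> card {y\<in>A. h y = h x} = N"
    and part: "\<And>x. x \<in> A \<Longrightarrow> card {y\<in>A. h y = h x \<and> P y} \<le> K"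
  shows "card {x\<in>A. P x} * N \<le> card A * K"
proof -
  have cA: "card A = (\<Sum>b\<in>h ` A. card {y\<in>A. h y = b})"
    using sum.group[of A "h ` A" h "\<lambda>_. 1::nat"] fin by simp
  also have "\<dots> = (\<Sum>b\<in>h ` A. N)"
    by (rule sum.cong[OF refl]) (use full in auto)
  finally have cA': "card A = card (h ` A) * N" by simp
  have finP: "finite {x\<in>A. P x}" using fin by simp
  have "card {x\<in>A. P x} = (\<Sum>b\<in>h ` A. card {y\<in>{x\<in>A. P x}. h y = b})"
  proof -
    have "h ` {x \<in> A. P x} \<subseteq> h ` A" by blast
    thus ?thesis using sum.group[of "{x\<in>A. P x}" "h ` A" h "\<lambda>_. 1::nat"] fin by simp
  qed
  also have "\<dots> \<le> (\<Sum>b\<in>h ` A. K)"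
  proof (rule sum_mono)
    fix b assume "b \<in> h ` A"
    then obtain x where x: "x \<in> A" "b = h x" by blast
    have "{y\<in>{x\<in>A. P x}. h y = b} = {y\<in>A. h y = h x \<and> P y}" using x by auto
    thus "card {y\<in>{x\<in>A. P x}. h y = b} \<le> K" using part[OF x(1)] by simp
  qed
  finally have "card {x\<in>A. P x} \<le> card (h ` A) * K" by simp
  hence "card {x\<in>A. P x} * N \<le> card (h ` A) * K * N" by simp
  also have "\<dots> = card A * K" using cA' by simp
  finally show ?thesis .
qed

lemma col_inj:
  assumes x: "x \<in> {..<k} \<rightarrow>\<^sub>E B" and y: "y \<in> {..<k} \<rightarrow>\<^sub>E B'"
    and a: "\<forall>i<k. (x i)(t:=0) = (y i)(t:=0)" and b: "\<forall>i<k. x i t = y i t"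
  shows "x = y"
proof (rule ext)
  fix i show "x i = y i"
  proof (cases "i < k")
    case True
    show ?thesis
    proof (rule ext)
      fix s show "x i s = y i s"
      proof (cases "s = t")
        case True thus ?thesis using b \<open>i<k\<close> by simp
      next
        case False thus ?thesis using fun_cong[OF a[rule_format, OF \<open>i<k\<close>], of s] by simp
      qed
    qed
  next
    case False
    hence "x i = undefined" "y i = undefined" using x y by (auto intro: PiE_arb)
    thus ?thesis by simp
  qed
qed

lemma count_Ev:
  fixes lam :: "nat \<times> nat \<Rightarrow> 'a::{field,finite}"
  assumes S: "S \<subseteq> {..<n}" "card S = k" "j0 \<in> S" "k \<le> j0"
  shows "card {X \<in> {..<k} \<rightarrow>\<^sub>E {..<n-k} \<rightarrow>\<^sub>E (UNIV::'a set). Ev k X S lam j0} * card (UNIV::'a set)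
         \<le> card ({..<k} \<rightarrow>\<^sub>E {..<n-k} \<rightarrow>\<^sub>E (UNIV::'a set))"
proof -
  define A where "A = {..<k} \<rightarrow>\<^sub>E {..<n-k} \<rightarrow>\<^sub>E (UNIV::'a set)"
  define t where "t = j0 - k"
  define h where "h X = (\<lambda>i. if i < k then (X i)(t := 0) else undefined)" for X :: "nat \<Rightarrow> nat \<Rightarrow> 'a"
  define col where "col X = (\<lambda>l\<in>{..<k}. X l t)" for X :: "nat \<Rightarrow> nat \<Rightarrow> 'a"
  define R where "R = Rset S k j0"
  define Img where "Img b = (\<lambda>\<gamma>. \<lambda>l\<in>{..<k}. (\<Sum>j\<in>R. \<gamma> j * Mx k b S lam l j) - Mx k b S lam l j0) ` (R \<rightarrow>\<^sub>E (UNIV::'a set))"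
    for b :: "nat \<Rightarrow> nat \<Rightarrow> 'a"
  have j0n: "j0 < n" using S by auto
  have tn: "t < n - k" unfolding t_def using j0n S(4) by simp
  have j0t: "j0 = t + k" unfolding t_def using S(4) by simp
  have finS: "finite S" using S(1) finite_subset by blast
  have k1: "1 \<le> k" using S(2,3) finS by (metis One_nat_def Suc_leI card_gt_0_iff empty_iff)
  have j0R: "j0 \<notin> R" unfolding R_def Rset_def using S(4) by simp
  have RS: "R \<subseteq> S - {j0}" using j0R unfolding R_def Rset_def by blast
  have finR: "finite R" using RS finS finite_subset by blast
  have cardR: "card R \<le> k - 1"
  proof -
    have "card R \<le> card (S - {j0})" using RS finS by (intro card_mono) auto
    also have "\<dots> = k - 1" using S(2,3) finS by simp
    finally show ?thesis .
  qed
  have g1: "gen_IX k (h X) l i = gen_IX k X l i" if "l < k" "i \<noteq> j0" for X l i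
  proof (cases "i < k")
    case True thus ?thesis by (simp add: gen_IX_def)
  next
    case False
    hence "i - k \<noteq> t" using that(2) j0t by auto
    thus ?thesis using False that(1) by (simp add: gen_IX_def h_def)
  qed
  have g2: "gen_IX k (h X) l j0 = 0" "gen_IX k X l j0 = X l t" if "l < k" for X l
    using that S(4) unfolding gen_IX_def h_def t_def by simp_all
  have Mx1: "Mx k (h X) S lam l j = Mx k X S lam l j" if "l < k" "j \<in> S" "j \<noteq> j0" for X l j
  proof -
    have "(\<Sum>i\<in>{i. i<j \<and> i\<notin>S}. lam (j,i) * gen_IX k (h X) l i) = (\<Sum>i\<in>{i. i<j \<and> i\<notin>S}. lam (j,i) * gen_IX k X l i)"
    proof (rule sum.cong[OF refl])
      fix i assume "i \<in> {i. i<j \<and> i\<notin>S}"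
      hence "i \<noteq> j0" using S(3) by auto
      thus "lam (j,i) * gen_IX k (h X) l i = lam (j,i) * gen_IX k X l i" using g1[OF that(1)] by simp
    qed
    thus ?thesis unfolding Mx_def using g1[OF that(1) that(3)] by simp
  qed
  have Mx2: "Mx k X S lam l j0 = X l t + Mx k (h X) S lam l j0" if "l < k" for X l
  proof -
    have "(\<Sum>i\<in>{i. i<j0 \<and> i\<notin>S}. lam (j0,i) * gen_IX k (h X) l i) = (\<Sum>i\<in>{i. i<j0 \<and> i\<notin>S}. lam (j0,i) * gen_IX k X l i)"
    proof (rule sum.cong[OF refl])
      fix i assume "i \<in> {i. i<j0 \<and> i\<notin>S}"
      hence "i \<noteq> j0" by auto
      thus "lam (j0,i) * gen_IX k (h X) l i = lam (j0,i) * gen_IX k X l i" using g1[OF that] by simp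
    qed
    thus ?thesis unfolding Mx_def using g2[OF that] by simp
  qed
  have EvImg: "col X \<in> Img (h X)" if ev: "Ev k X S lam j0" for X
  proof -
    obtain \<gamma> where g: "\<forall>l<k. Mx k X S lam l j0 = (\<Sum>j\<in>R. \<gamma> j * Mx k X S lam l j)"
      using ev unfolding Ev_def R_def by blast
    define \<gamma>' where "\<gamma>' = restrict \<gamma> R"
    have "col X = (\<lambda>l\<in>{..<k}. (\<Sum>j\<in>R. \<gamma>' j * Mx k (h X) S lam l j) - Mx k (h X) S lam l j0)"
    proof (rule ext)
      fix l show "col X l = (\<lambda>l\<in>{..<k}. (\<Sum>j\<in>R. \<gamma>' j * Mx k (h X) S lam l j) - Mx k (h X) S lam l j0) l"
      proof (cases "l < k")
        case True
        have "(\<Sum>j\<in>R. \<gamma>' j * Mx k (h X) S lam l j) = (\<Sum>j\<in>R. \<gamma> j * Mx k X S lam l j)"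
        proof (rule sum.cong[OF refl])
          fix j assume j: "j \<in> R"
          hence "j \<in> S" "j \<noteq> j0" using RS by auto
          thus "\<gamma>' j * Mx k (h X) S lam l j = \<gamma> j * Mx k X S lam l j"
            using Mx1[OF True] j unfolding \<gamma>'_def by simp
        qed
        also have "\<dots> = X l t + Mx k (h X) S lam l j0" using g True Mx2[OF True, of X] by simp
        finally show ?thesis unfolding col_def using True by simp
      next
        case False thus ?thesis unfolding col_def by simp
      qed
    qed
    moreover have "\<gamma>' \<in> R \<rightarrow>\<^sub>E UNIV" unfolding \<gamma>'_def by simp
    ultimately show ?thesis unfolding Img_def by blast
  qed
  have cardImg: "card (Img b) \<le> card (UNIV::'a set) ^ (k - 1)" for b
  proof -
    have "card (Img b) \<le> card (R \<rightarrow>\<^sub>E (UNIV::'a set))" unfolding Img_def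
      by (rule card_image_le) (simp add: finR finite_PiE)
    also have "\<dots> = card (UNIV::'a set) ^ card R" using finR by (simp add: card_PiE)
    also have "\<dots> \<le> card (UNIV::'a set) ^ (k - 1)"
    proof (rule power_increasing[OF cardR])
      have "card (UNIV::'a set) > 0" by (rule finite_UNIV_card_ge_0) (rule finite_UNIV)
      thus "1 \<le> card (UNIV::'a set)" by simp
    qed
    finally show ?thesis .
  qed
  have inj: "x = y" if "x \<in> A" "y \<in> A" "h x = h y" "col x = col y" for x y
  proof -
    have a: "\<forall>i<k. (x i)(t:=0) = (y i)(t:=0)"
    proof (intro allI impI)
      fix i assume "i < k"
      thus "(x i)(t:=0) = (y i)(t:=0)" using fun_cong[OF that(3), of i] unfolding h_def by simp
    qed
    have b: "\<forall>i<k. x i t = y i t"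
    proof (intro allI impI)
      fix i assume "i < k"
      thus "x i t = y i t" using fun_cong[OF that(4), of i] unfolding col_def by simp
    qed
    show ?thesis by (rule col_inj[OF that(1,2)[unfolded A_def] a b])
  qed
  have finA: "finite A" unfolding A_def by (simp add: finite_PiE)
  have full: "card {y\<in>A. h y = h x} = card (UNIV::'a set) ^ k" if x: "x \<in> A" for x
  proof -
    have "bij_betw col {y\<in>A. h y = h x} ({..<k} \<rightarrow>\<^sub>E (UNIV::'a set))"
    proof (rule bij_betw_imageI)
      show "inj_on col {y\<in>A. h y = h x}" by (rule inj_onI) (use inj in auto)
      show "col ` {y\<in>A. h y = h x} = {..<k} \<rightarrow>\<^sub>E (UNIV::'a set)"
      proof
        show "col ` {y\<in>A. h y = h x} \<subseteq> {..<k} \<rightarrow>\<^sub>E (UNIV::'a set)"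
        proof (rule image_subsetI)
          fix X show "col X \<in> {..<k} \<rightarrow>\<^sub>E (UNIV::'a set)"
            unfolding col_def by (rule restrict_PiE_iff[THEN iffD2]) simp
        qed
      next
        show "{..<k} \<rightarrow>\<^sub>E (UNIV::'a set) \<subseteq> col ` {y\<in>A. h y = h x}"
        proof
          fix v assume v: "v \<in> {..<k} \<rightarrow>\<^sub>E (UNIV::'a set)"
          define y where "y = (\<lambda>i. if i < k then (x i)(t := v i) else undefined)"
          have yA: "y \<in> A"
            unfolding A_def
          proof (rule PiE_I)
            fix i assume i: "i \<in> {..<k}"
            have xi: "x i \<in> {..<n-k} \<rightarrow>\<^sub>E UNIV" using x i unfolding A_def by blast
            have "(x i)(t := v i) \<in> insert t {..<n-k} \<rightarrow>\<^sub>E UNIV"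
              by (rule PiE_fun_upd[OF _ xi]) simp
            moreover have "insert t {..<n-k} = {..<n-k}" using tn by auto
            moreover have "y i = (x i)(t := v i)" using i unfolding y_def by simp
            ultimately show "y i \<in> {..<n-k} \<rightarrow>\<^sub>E UNIV" by simp
          next
            fix i assume "i \<notin> {..<k}" thus "y i = undefined" unfolding y_def by simp
          qed
          have "h y = h x"
          proof (rule ext)
            fix i show "h y i = h x i"
            proof (cases "i < k")
              case True
              hence "y i = (x i)(t := v i)" by (simp add: y_def)
              thus ?thesis using True by (simp add: h_def)
            next
              case False thus ?thesis by (simp add: h_def)
            qed
          qed
          moreover have "col y = v"
          proof (rule ext)
            fix l show "col y l = v l"
            proof (cases "l < k")
              case True
              hence "y l = (x l)(t := v l)" by (simp add: y_def)
              thus ?thesis using True by (simp add: col_def)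
            next
              case False
              hence "v l = undefined" using v by (intro PiE_arb[OF v]) simp
              thus ?thesis using False by (simp add: col_def)
            qed
          qed
          ultimately show "v \<in> col ` {y\<in>A. h y = h x}" using yA by blast
        qed
      qed
    qed
    hence "card {y\<in>A. h y = h x} = card ({..<k} \<rightarrow>\<^sub>E (UNIV::'a set))" by (rule bij_betw_same_card)
    thus ?thesis by (simp add: card_PiE)
  qed
  have part: "card {y\<in>A. h y = h x \<and> Ev k y S lam j0} \<le> card (UNIV::'a set) ^ (k - 1)" if x: "x \<in> A" for x
  proof -
    have i1: "inj_on col {y\<in>A. h y = h x \<and> Ev k y S lam j0}" by (rule inj_onI) (use inj in auto)
    have i2: "col ` {y\<in>A. h y = h x \<and> Ev k y S lam j0} \<subseteq> Img (h x)"
      using EvImg by force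
    have "card {y\<in>A. h y = h x \<and> Ev k y S lam j0} \<le> card (Img (h x))"
    proof -
      have fI: "finite (Img (h x))" unfolding Img_def using finR by (simp add: finite_PiE)
      have "card {y\<in>A. h y = h x \<and> Ev k y S lam j0} = card (col ` {y\<in>A. h y = h x \<and> Ev k y S lam j0})"
        using i1 by (simp add: card_image)
      also have "\<dots> \<le> card (Img (h x))" using fI i2 by (rule card_mono)
      finally show ?thesis .
    qed
    thus ?thesis using cardImg[of "h x"] by linarith
  qed
  have "card {X\<in>A. Ev k X S lam j0} * card (UNIV::'a set) ^ k \<le> card A * card (UNIV::'a set) ^ (k - 1)"
    by (rule fibre_count[OF finA full part])
  moreover have "card (UNIV::'a set) ^ k = card (UNIV::'a set) * card (UNIV::'a set) ^ (k - 1)" using k1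
    by (metis Suc_diff_le diff_Suc_1 power_Suc)
  ultimately have "card {X\<in>A. Ev k X S lam j0} * card (UNIV::'a set) * card (UNIV::'a set) ^ (k - 1) \<le> card A * card (UNIV::'a set) ^ (k - 1)"
    by (simp add: mult.assoc)
  moreover have "card (UNIV::'a set) ^ (k - 1) > 0"
  proof -
    have c0: "card (UNIV::'a set) > 0" by (rule finite_UNIV_card_ge_0) (rule finite_UNIV)
    thus ?thesis by simp
  qed
  ultimately have "card {X\<in>A. Ev k X S lam j0} * card (UNIV::'a set) \<le> card A" by (meson mult_le_cancel2)
  thus ?thesis unfolding A_def .
qed

lemma Mx_small:
  assumes "l < k" "j < k" "l \<in> S"
  shows "Mx k X S lam l j = (if l = j then 1 else 0)"
proof -
  have "(\<Sum>i\<in>{i. i<j \<and> i\<notin>S}. lam (j,i) * gen_IX k X l i) = 0"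
  proof (rule sum.neutral, rule ballI)
    fix i assume i: "i \<in> {i. i<j \<and> i\<notin>S}"
    hence "i < k" "i \<noteq> l" using assms by auto
    thus "lam (j,i) * gen_IX k X l i = 0" by (simp add: gen_IX_def)
  qed
  thus ?thesis using assms by (simp add: Mx_def gen_IX_def)
qed

lemma ev_exists:
  fixes X :: "nat \<Rightarrow> nat \<Rightarrow> 'a::{field,finite}"
  assumes S: "S \<subseteq> {..<n}" "card S = k"
    and d: "l0 < k" "d l0 \<noteq> 0"
    and rel: "\<forall>j\<in>S. cw k (gen_IX k X) d j = (\<Sum>i\<in>{i. i<j \<and> i\<notin>S}. lam (j,i) * cw k (gen_IX k X) d i)"
  shows "\<exists>j0\<in>S. k \<le> j0 \<and> Ev k X S lam j0"
proof -
  define G where "G = gen_IX k X"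
  define M where "M = Mx k X S lam"
  have finS: "finite S" using S(1) finite_subset by blast
  have orth: "(\<Sum>l<k. d l * M l j) = 0" if j: "j \<in> S" for j
  proof -
    define T where "T = {i. i<j \<and> i\<notin>S}"
    have fT: "finite T" unfolding T_def by simp
    have "(\<Sum>l<k. d l * M l j) = (\<Sum>l<k. d l * G l j) - (\<Sum>l<k. \<Sum>i\<in>T. d l * (lam (j,i) * G l i))"
      unfolding M_def Mx_def G_def T_def by (simp add: right_diff_distrib sum_subtractf sum_distrib_left)
    also have "(\<Sum>l<k. \<Sum>i\<in>T. d l * (lam (j,i) * G l i)) = (\<Sum>i\<in>T. lam (j,i) * (\<Sum>l<k. d l * G l i))"
      by (subst sum.swap) (simp add: sum_distrib_left mult_ac)
    also have "\<dots> = (\<Sum>i\<in>T. lam (j,i) * cw k G d i)" by (simp add: cw_def)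
    also have "\<dots> = cw k G d j" using rel j unfolding T_def G_def by simp
    also have "(\<Sum>l<k. d l * G l j) = cw k G d j" by (simp add: cw_def)
    finally show ?thesis by simp
  qed
  have dep: "\<exists>\<beta>. (\<forall>l<k. (\<Sum>j\<in>S. \<beta> j * M l j) = 0) \<and> (\<exists>j\<in>S. \<beta> j \<noteq> 0)"
  proof (rule ccontr)
    assume nd: "\<not> (\<exists>\<beta>. (\<forall>l<k. (\<Sum>j\<in>S. \<beta> j * M l j) = 0) \<and> (\<exists>j\<in>S. \<beta> j \<noteq> 0))"
    have nd': "\<And>\<gamma>. (\<forall>l<k. (\<Sum>j\<in>S. \<gamma> j * M l j) = 0) \<Longrightarrow> (\<forall>j\<in>S. \<gamma> j = 0)"
      using nd by blast
    define L where "L \<beta> = (\<lambda>l\<in>{..<k}. \<Sum>j\<in>S. \<beta> j * M l j)" for \<beta> :: "nat \<Rightarrow> 'a"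
    have injL: "inj_on L (S \<rightarrow>\<^sub>E UNIV)"
    proof (rule inj_onI)
      fix \<beta> \<beta>' assume b: "\<beta> \<in> S \<rightarrow>\<^sub>E UNIV" "\<beta>' \<in> S \<rightarrow>\<^sub>E UNIV" and e: "L \<beta> = L \<beta>'"
      have "\<forall>l<k. (\<Sum>j\<in>S. (\<beta> j - \<beta>' j) * M l j) = 0"
      proof (intro allI impI)
        fix l assume l: "l < k"
        have "(\<Sum>j\<in>S. \<beta> j * M l j) = (\<Sum>j\<in>S. \<beta>' j * M l j)"
          using fun_cong[OF e, of l] l unfolding L_def by simp
        thus "(\<Sum>j\<in>S. (\<beta> j - \<beta>' j) * M l j) = 0"
          by (simp add: left_diff_distrib sum_subtractf)
      qed
      hence "\<forall>j\<in>S. \<beta> j - \<beta>' j = 0" by (rule nd')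
      hence bb: "\<forall>j\<in>S. \<beta> j = \<beta>' j" by simp
      show "\<beta> = \<beta>'" by (rule PiE_ext[OF b]) (use bb in blast)
    qed
    have sub: "L ` (S \<rightarrow>\<^sub>E UNIV) \<subseteq> {..<k} \<rightarrow>\<^sub>E (UNIV::'a set)"
    proof (rule image_subsetI)
      fix \<beta> show "L \<beta> \<in> {..<k} \<rightarrow>\<^sub>E (UNIV::'a set)"
        unfolding L_def by (rule restrict_PiE_iff[THEN iffD2]) simp
    qed
    have "card (L ` (S \<rightarrow>\<^sub>E UNIV)) = card (S \<rightarrow>\<^sub>E (UNIV::'a set))"
      using injL by (rule card_image)
    also have "\<dots> = card (UNIV::'a set) ^ k" using finS S(2) by (simp add: card_PiE)
    also have "\<dots> = card ({..<k} \<rightarrow>\<^sub>E (UNIV::'a set))" by (simp add: card_PiE)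
    finally have "L ` (S \<rightarrow>\<^sub>E UNIV) = {..<k} \<rightarrow>\<^sub>E (UNIV::'a set)"
      using sub by (intro card_subset_eq) (auto simp: finite_PiE)
    moreover define e where "e = (\<lambda>l\<in>{..<k}. if l = l0 then (1::'a) else 0)"
    moreover have "e \<in> {..<k} \<rightarrow>\<^sub>E (UNIV::'a set)" unfolding e_def
      by (rule restrict_PiE_iff[THEN iffD2]) simp
    ultimately obtain \<beta> where Le: "L \<beta> = e" by (metis imageE)
    hence be: "(\<Sum>j\<in>S. \<beta> j * M l j) = (if l = l0 then 1 else 0)" if "l < k" for l
    proof -
      have "L \<beta> l = e l" using Le by simp
      thus ?thesis using that unfolding L_def e_def by (simp cong: if_cong)
    qed
    have "d l0 = (\<Sum>l<k. d l * (if l = l0 then 1 else 0))"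
      using d(1) by (simp add: if_distrib cong: if_cong)
    also have "\<dots> = (\<Sum>l<k. d l * (\<Sum>j\<in>S. \<beta> j * M l j))"
      by (rule sum.cong) (simp_all add: be)
    also have "\<dots> = (\<Sum>j\<in>S. \<beta> j * (\<Sum>l<k. d l * M l j))"
      by (simp add: sum_distrib_left mult_ac sum.swap[of _ "{..<k}"])
    also have "\<dots> = 0" using orth by simp
    finally show False using d(2) by simp
  qed
  then obtain \<beta> where b0: "\<forall>l<k. (\<Sum>j\<in>S. \<beta> j * M l j) = 0" and b1: "\<exists>j\<in>S. \<beta> j \<noteq> 0" by blast
  define B where "B = {j\<in>S. k \<le> j \<and> \<beta> j \<noteq> 0}"
  have finB: "finite B" unfolding B_def using finS by simp
  have Bne: "B \<noteq> {}"
  proof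
    assume B0: "B = {}"
    have "\<beta> l = 0" if l: "l \<in> S" "l < k" for l
    proof -
      have "(\<Sum>j\<in>S. \<beta> j * M l j) = (\<Sum>j\<in>S. if j = l then \<beta> j else 0)"
      proof (rule sum.cong[OF refl])
        fix j assume j: "j \<in> S"
        show "\<beta> j * M l j = (if j = l then \<beta> j else 0)"
        proof (cases "j < k")
          case True thus ?thesis unfolding M_def using Mx_small[OF l(2) True l(1), of X lam] by simp
        next
          case False
          hence "\<beta> j = 0" using B0 j unfolding B_def by auto
          thus ?thesis using False l by auto
        qed
      qed
      also have "\<dots> = \<beta> l" using finS l by simp
      finally show ?thesis using b0 l by simp
    qed
    moreover have "\<beta> j = 0" if "j \<in> S" "\<not> j < k" for j using B0 that unfolding B_def by auto
    ultimately show False using b1 by (meson not_less)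
  qed
  define j0 where "j0 = Max B"
  have j0B: "j0 \<in> B" unfolding j0_def using finB Bne by (rule Max_in)
  hence j0: "j0 \<in> S" "k \<le> j0" "\<beta> j0 \<noteq> 0" unfolding B_def by auto
  have maxB: "j \<le> j0" if "j \<in> B" for j unfolding j0_def using finB that by simp
  define R where "R = Rset S k j0"
  have RS: "R \<subseteq> S - {j0}" unfolding R_def Rset_def using j0 by auto
  have outR: "\<beta> j = 0" if "j \<in> S - {j0}" "j \<notin> R" for j
  proof (rule ccontr)
    assume "\<beta> j \<noteq> 0"
    moreover have "k \<le> j" using that unfolding R_def Rset_def by auto
    ultimately have "j \<in> B" using that unfolding B_def by auto
    hence "j \<le> j0" by (rule maxB)
    thus False using that unfolding R_def Rset_def by auto
  qed
  have "Ev k X S lam j0"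
    unfolding Ev_def
  proof (rule exI[of _ "\<lambda>j. - \<beta> j / \<beta> j0"], intro allI impI)
    fix l assume l: "l < k"
    have "0 = (\<Sum>j\<in>S. \<beta> j * M l j)" using b0 l by simp
    also have "\<dots> = \<beta> j0 * M l j0 + (\<Sum>j\<in>S - {j0}. \<beta> j * M l j)"
      using finS j0(1) by (simp add: sum.remove)
    also have "(\<Sum>j\<in>S - {j0}. \<beta> j * M l j) = (\<Sum>j\<in>R. \<beta> j * M l j)"
    proof (rule sum.mono_neutral_right[of "S - {j0}" R])
      show "finite (S - {j0})" using finS by simp
      show "R \<subseteq> S - {j0}" by (rule RS)
      show "\<forall>i\<in>S - {j0} - R. \<beta> i * M l i = 0" using outR by simp
    qed
    finally have eq: "\<beta> j0 * M l j0 = - (\<Sum>j\<in>R. \<beta> j * M l j)" by (simp add: eq_neg_iff_add_eq_0)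
    have "(\<Sum>j\<in>R. - \<beta> j / \<beta> j0 * M l j) = - (\<Sum>j\<in>R. \<beta> j * M l j) / \<beta> j0"
      by (simp add: sum_divide_distrib sum_negf)
    also have "\<dots> = M l j0" using eq j0(3) by (simp add: field_simps)
    finally show "Mx k X S lam l j0 = (\<Sum>j\<in>Rset S k j0. - \<beta> j / \<beta> j0 * Mx k X S lam l j)"
      unfolding M_def R_def by simp
  qed
  thus ?thesis using j0 by blast
qed

lemma card_Tset: "finite S \<Longrightarrow> card (Tset S) = wgt S"
  unfolding Tset_def wgt_def by (subst card_SigmaI) auto

theorem theorem4p6:
  fixes F :: "'a::{field,finite} set" and q m k n :: nat
  assumes "prime_power q" and "subfield F" and "card F = q"
    and "card (UNIV::'a set) = q ^ m" and "m \<ge> 1" and "1 \<le> k" and "k < n"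
  shows "real (card {X \<in> {..<k} \<rightarrow>\<^sub>E {..<n-k} \<rightarrow>\<^sub>E (UNIV::'a set).
                 is_MRD F n k (row_space k n (gen_IX k X))})
           / real (card ({..<k} \<rightarrow>\<^sub>E {..<n-k} \<rightarrow>\<^sub>E (UNIV::'a set)))
         \<ge> 1 - (\<Sum>r=0..k. real r * gauss_binom q k (k - r) * gauss_binom q (n - k) r
                           * real q ^ (r^2) / real q ^ m)"
proof -
  note pp = assms(1) and sf = assms(2) and cF = assms(3) and cU = assms(4)
    and k1 = assms(6) and kn = assms(7)
  have q2: "q \<ge> 2"
  proof -
    obtain p e where pe: "prime p" "e > 0" "q = p ^ e" using pp unfolding prime_power_def by blast
    have "p \<ge> 2" using pe(1) by (simp add: prime_ge_2_nat)
    hence "p ^ 1 \<le> p ^ e" using pe(2) by (intro power_increasing) auto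
    thus ?thesis using \<open>p \<ge> 2\<close> pe(3) by simp
  qed
  define A where "A = {..<k} \<rightarrow>\<^sub>E {..<n-k} \<rightarrow>\<^sub>E (UNIV::'a set)"
  define Q where "Q = card (UNIV::'a set)"
  define Sub where "Sub = {S. S \<subseteq> {..<n} \<and> card S = k}"
  define W where "W = Sigma Sub (\<lambda>S. Tset S \<rightarrow>\<^sub>E F)"
  define J where "J p = fst p \<inter> {k..<n}" for p :: "nat set \<times> (nat \<times> nat \<Rightarrow> 'a)"
  define Evs where "Evs p j0 = {X\<in>A. Ev k X (fst p) (snd p) j0}" for p :: "nat set \<times> (nat \<times> nat \<Rightarrow> 'a)" and j0
  define Good where "Good = {X\<in>A. is_MRD F n k (row_space k n (gen_IX k X))}"
  define Bad where "Bad = {X\<in>A. \<not> is_MRD F n k (row_space k n (gen_IX k X))}"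
  have finA: "finite A" unfolding A_def by (simp add: finite_PiE)
  have cA: "card A > 0"
  proof -
    have "A \<noteq> {}" unfolding A_def by (simp add: PiE_eq_empty_iff)
    thus ?thesis using finA by (simp add: card_gt_0_iff)
  qed
  have Q0: "Q > 0" unfolding Q_def by (rule finite_UNIV_card_ge_0) (rule finite_UNIV)
  have finSub: "finite Sub" unfolding Sub_def by (rule finite_subset[of _ "Pow {..<n}"]) auto
  have finF: "finite F" by (rule finite_subset[of _ UNIV]) auto
  have finTP: "finite (Tset S \<rightarrow>\<^sub>E F)" if "S \<in> Sub" for S
  proof -
    have fS: "finite S" using that unfolding Sub_def using finite_subset by blast
    have "finite (Tset S)" unfolding Tset_def using fS by auto
    thus ?thesis using finF by (simp add: finite_PiE)
  qed
  have finW: "finite W" unfolding W_def using finSub finTP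
    by (intro finite_SigmaI) auto
  have cGB: "card Good + card Bad = card A"
  proof -
    have "Good \<union> Bad = A" "Good \<inter> Bad = {}" unfolding Good_def Bad_def by auto
    thus ?thesis using finA by (metis card_Un_disjoint finite_Un)
  qed
  have cover: "Bad \<subseteq> (\<Union>p\<in>W. \<Union>j0\<in>J p. Evs p j0)"
  proof
    fix X assume X: "X \<in> Bad"
    hence XA: "X \<in> A" and nm: "\<not> is_MRD F n k (row_space k n (gen_IX k X))" unfolding Bad_def by auto
    obtain d where d: "\<exists>l<k. d l \<noteq> 0" "rank_R F n (cw k (gen_IX k X) d) \<le> n - k"
      using nonMRD_low[OF sf k1 kn nm] by blast
    obtain l0 where l0: "l0 < k" "d l0 \<noteq> 0" using d(1) by blast
    obtain S lam where S: "S \<subseteq> {..<n}" "card S = k" "lam \<in> Tset S \<rightarrow>\<^sub>E F"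
      "\<forall>j\<in>S. cw k (gen_IX k X) d j = (\<Sum>i\<in>{i. i<j \<and> i\<notin>S}. lam (j,i) * cw k (gen_IX k X) d i)"
      using witness_exists[OF sf less_imp_le[OF kn] d(2)] by blast
    obtain j0 where j0: "j0 \<in> S" "k \<le> j0" "Ev k X S lam j0"
      using ev_exists[OF S(1,2) l0 S(4)] by blast
    have "(S, lam) \<in> W" unfolding W_def Sub_def using S by simp
    moreover have "j0 \<in> J (S, lam)" unfolding J_def using j0 S(1) by auto
    moreover have "X \<in> Evs (S, lam) j0" unfolding Evs_def using XA j0 by simp
    ultimately show "X \<in> (\<Union>p\<in>W. \<Union>j0\<in>J p. Evs p j0)" by blast
  qed
  have finJ: "finite (J p)" for p unfolding J_def by simp
  have "card Bad \<le> card (\<Union>p\<in>W. \<Union>j0\<in>J p. Evs p j0)"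
  proof (rule card_mono[OF _ cover])
    have "(\<Union>p\<in>W. \<Union>j0\<in>J p. Evs p j0) \<subseteq> A" unfolding Evs_def by blast
    thus "finite (\<Union>p\<in>W. \<Union>j0\<in>J p. Evs p j0)" using finA by (rule finite_subset)
  qed
  also have "\<dots> \<le> (\<Sum>p\<in>W. card (\<Union>j0\<in>J p. Evs p j0))" by (rule card_UN_le[OF finW])
  also have "\<dots> \<le> (\<Sum>p\<in>W. \<Sum>j0\<in>J p. card (Evs p j0))"
    by (rule sum_mono) (rule card_UN_le[OF finJ])
  finally have cB: "real (card Bad) \<le> (\<Sum>p\<in>W. \<Sum>j0\<in>J p. real (card (Evs p j0)))"
    by (metis (mono_tags, lifting) of_nat_le_iff of_nat_sum sum.cong)
  have evb: "real (card (Evs p j0)) \<le> real (card A) / real Q" if pW: "p \<in> W" and jJ: "j0 \<in> J p" for p j0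
  proof -
    obtain S lam where p: "p = (S, lam)" "S \<subseteq> {..<n}" "card S = k"
      using pW unfolding W_def Sub_def by auto
    have j0: "j0 \<in> S" "k \<le> j0" using jJ unfolding J_def p by auto
    have "card (Evs p j0) * Q \<le> card A"
      unfolding Evs_def A_def Q_def p using count_Ev[OF p(2,3) j0, of lam] by simp
    hence "real (card (Evs p j0)) * real Q \<le> real (card A)" by (metis of_nat_le_iff of_nat_mult)
    thus ?thesis using Q0 by (simp add: field_simps)
  qed
  have "(\<Sum>p\<in>W. \<Sum>j0\<in>J p. real (card (Evs p j0))) \<le> (\<Sum>p\<in>W. \<Sum>j0\<in>J p. real (card A) / real Q)"
    by (intro sum_mono) (use evb in auto)
  also have "\<dots> = (\<Sum>p\<in>W. real (card (J p))) * (real (card A) / real Q)"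
    by (simp add: sum_distrib_right sum_divide_distrib)
  also have "(\<Sum>p\<in>W. real (card (J p))) = (\<Sum>S\<in>Sub. real (card (S \<inter> {k..<n})) * real q ^ wgt S)"
  proof -
    have "(\<Sum>p\<in>W. real (card (J p))) = (\<Sum>S\<in>Sub. \<Sum>lam\<in>Tset S \<rightarrow>\<^sub>E F. real (card (S \<inter> {k..<n})))"
      unfolding W_def J_def using finSub finTP
      by (subst sum.Sigma) (auto simp: split_def)
    also have "\<dots> = (\<Sum>S\<in>Sub. real (card (S \<inter> {k..<n})) * real q ^ wgt S)"
    proof (rule sum.cong[OF refl])
      fix S assume "S \<in> Sub"
      hence fS: "finite S" unfolding Sub_def using finite_subset by blast
      have fT: "finite (Tset S)" unfolding Tset_def using fS by auto
      have "card (Tset S \<rightarrow>\<^sub>E F) = q ^ wgt S"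
        using fT cF card_Tset[OF fS] by (simp add: card_PiE)
      thus "(\<Sum>lam\<in>Tset S \<rightarrow>\<^sub>E F. real (card (S \<inter> {k..<n}))) = real (card (S \<inter> {k..<n})) * real q ^ wgt S"
        by simp
    qed
    finally show ?thesis .
  qed
  also have "(\<Sum>S\<in>Sub. real (card (S \<inter> {k..<n})) * real q ^ wgt S)
      = (\<Sum>r=0..k. real r * gauss_binom q k (k - r) * gauss_binom q (n - k) r * real q ^ (r^2))"
    unfolding Sub_def using sum_identity[of k n q] kn gsum_gauss[OF q2] by simp
  finally have cB2: "real (card Bad) \<le> (\<Sum>r=0..k. real r * gauss_binom q k (k - r) * gauss_binom q (n - k) r * real q ^ (r^2)) * (real (card A) / real Q)"
    using cB by linarith
  define \<Sigma> where "\<Sigma> = (\<Sum>r=0..k. real r * gauss_binom q k (k - r) * gauss_binom q (n - k) r * real q ^ (r^2))"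
  have RHS: "(\<Sum>r=0..k. real r * gauss_binom q k (k - r) * gauss_binom q (n - k) r * real q ^ (r^2) / real q ^ m) = \<Sigma> / real Q"
    unfolding \<Sigma>_def Q_def cU by (simp add: sum_divide_distrib)
  have "real (card Good) = real (card A) - real (card Bad)" using cGB by simp
  hence "real (card Good) / real (card A) = 1 - real (card Bad) / real (card A)"
    using cA by (simp add: field_simps)
  moreover have "real (card Bad) / real (card A) \<le> \<Sigma> / real Q"
    using cB2 cA Q0 unfolding \<Sigma>_def by (simp add: field_simps)
  ultimately have "real (card Good) / real (card A) \<ge> 1 - \<Sigma> / real Q" by simp
  thus ?thesis unfolding RHS[symmetric] Good_def A_def by simp
qed

end
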